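(* Let $S\subseteq\Sigma^n$ be a double-MDS-code and let $R\subseteq S$ be a prime double-code. Then $S$ is prime if and only if $\backslash_i R=\backslash_{i'}R$ for all $i,i'\in[n]$.
   Context: Let $\Sigma=\{0,1,2,3\}$, $[n]=\{1,\ldots,n\}$. An $i$-line of $\Sigma^n$ is a set of the four words that agree in all coordinates except the $i$th; a line is an $i$-line for some $i$. A double-code is a set meeting every line in $0$ or $2$ elements; a double-MDS-code is a set meeting every line in exactly $2$ elements; a double-code is complementable if contained in a double-MDS-code, and prime if complementable, nonempty and not partitionable into two or more nonempty double-codes. For $S\subseteq\Sigma^n$ and $i\in[n]$, $\mathcal E_i(S)$ is the union of all $i$-lines that meet $S$, and $\backslash_i S=\mathcal E_i(S)\setminus S$. *)

theory Defs
  imports Main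
begin

text \<open>Alphabet Sigma = {0,1,2,3}; words of Sigma^n are lists of length n over Sigma.
  Coordinates are numbered 1..n; coordinate i is list index i - 1.\<close>

definition Sigma :: "nat set" where
  "Sigma = {0, 1, 2, 3}"

definition words :: "nat \<Rightarrow> nat list set" where
  "words n = {x. length x = n \<and> set x \<subseteq> Sigma}"

definition iline :: "nat \<Rightarrow> nat list \<Rightarrow> nat list set" where
  "iline i x = {x[i - 1 := a] | a. a \<in> Sigma}"

definition ilines :: "nat \<Rightarrow> nat \<Rightarrow> nat list set set" where
  "ilines n i = {iline i x | x. x \<in> words n}"

definition lines :: "nat \<Rightarrow> nat list set set" where
  "lines n = (\<Union>i\<in>{1..n}. ilines n i)"

definition double_code :: "nat \<Rightarrow> nat list set \<Rightarrow> bool" where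
  "double_code n C \<longleftrightarrow> C \<subseteq> words n \<and> (\<forall>L\<in>lines n. card (C \<inter> L) = 0 \<or> card (C \<inter> L) = 2)"

definition double_MDS_code :: "nat \<Rightarrow> nat list set \<Rightarrow> bool" where
  "double_MDS_code n C \<longleftrightarrow> C \<subseteq> words n \<and> (\<forall>L\<in>lines n. card (C \<inter> L) = 2)"

definition complementable :: "nat \<Rightarrow> nat list set \<Rightarrow> bool" where
  "complementable n C \<longleftrightarrow> double_code n C \<and> (\<exists>M. double_MDS_code n M \<and> C \<subseteq> M)"

definition partitionable_dc :: "nat \<Rightarrow> nat list set \<Rightarrow> bool" where
  "partitionable_dc n C \<longleftrightarrow> (\<exists>P. \<Union>P = C \<and> 2 \<le> card P \<and>
      (\<forall>A\<in>P. \<forall>B\<in>P. A \<noteq> B \<longrightarrow> A \<inter> B = {}) \<and>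
      (\<forall>A\<in>P. A \<noteq> {} \<and> double_code n A))"

definition prime_dc :: "nat \<Rightarrow> nat list set \<Rightarrow> bool" where
  "prime_dc n C \<longleftrightarrow> complementable n C \<and> C \<noteq> {} \<and> \<not> partitionable_dc n C"

definition Ext :: "nat \<Rightarrow> nat \<Rightarrow> nat list set \<Rightarrow> nat list set" where
  "Ext n i S = \<Union>{L \<in> ilines n i. L \<inter> S \<noteq> {}}"

definition bsl :: "nat \<Rightarrow> nat \<Rightarrow> nat list set \<Rightarrow> nat list set" where
  "bsl n i S = Ext n i S - S"

end

theory Submission
  imports Defs
begin

lemma iline_img: "iline i x = (\<lambda>a. x[i - 1 := a]) ` Sigma"
  unfolding iline_def by auto

lemma finite_Sigma: "finite Sigma" unfolding Sigma_def by simp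

lemma iline_finite: "finite (iline i x)"
  unfolding iline_img using finite_Sigma by simp

lemma iline_words: "x \<in> words n \<Longrightarrow> iline i x \<subseteq> words n"
  unfolding iline_def words_def using set_update_subset_insert by fastforce

lemma self_in_iline:
  assumes "x \<in> words n" "1 \<le> i" "i \<le> n" shows "x \<in> iline i x"
proof -
  have "x ! (i - 1) \<in> Sigma" using assms unfolding words_def
  proof -
    have "i - 1 < length x" using assms unfolding words_def by auto
    then have "x ! (i - 1) \<in> set x" by (rule nth_mem)
    then show ?thesis using assms(1) unfolding words_def by auto
  qed
  moreover have "x = x[i - 1 := x ! (i - 1)]" by simp
  ultimately show ?thesis unfolding iline_def by blast
qed

lemma iline_same: "y \<in> iline i x \<Longrightarrow> iline i y = iline i x"
  unfolding iline_def by auto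

lemma iline_lines: "x \<in> words n \<Longrightarrow> i \<in> {1..n} \<Longrightarrow> iline i x \<in> lines n"
  unfolding lines_def ilines_def by blast

lemma lines_finite: "L \<in> lines n \<Longrightarrow> finite L"
  unfolding lines_def ilines_def using iline_finite by auto

lemma lines_words: "L \<in> lines n \<Longrightarrow> L \<subseteq> words n"
  unfolding lines_def ilines_def using iline_words by auto

lemma Ext_mem: "y \<in> Ext n i R \<longleftrightarrow> (\<exists>x\<in>words n. y \<in> iline i x \<and> iline i x \<inter> R \<noteq> {})"
  unfolding Ext_def ilines_def by blast

lemma Ext_upd:
  assumes "y \<in> Ext n (Suc j) R" "a \<in> Sigma"
  shows "y[j := a] \<in> Ext n (Suc j) R"
proof -
  obtain x where x: "x \<in> words n" "y \<in> iline (Suc j) x" "iline (Suc j) x \<inter> R \<noteq> {}"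
    using assms Ext_mem by blast
  have "y[j := a] \<in> iline (Suc j) y" using assms(2) unfolding iline_def by auto
  then have "y[j := a] \<in> iline (Suc j) x" using iline_same[OF x(2)] by simp
  then show ?thesis using x Ext_mem by blast
qed

lemma take_drop_upd:
  assumes "length x = length y" "k < length y"
  shows "take (Suc k) y @ drop (Suc k) x = (take k y @ drop k x)[k := y ! k]"
  using assms by (intro nth_equalityI) (auto simp: nth_append nth_list_update min_def)

lemma closure_all:
  assumes E: "\<And>j z a. j < n \<Longrightarrow> z \<in> E \<Longrightarrow> a \<in> Sigma \<Longrightarrow> z[j := a] \<in> E"
    and x: "x \<in> E" "x \<in> words n" and y: "y \<in> words n"
  shows "y \<in> E"
proof -
  have "k \<le> n \<Longrightarrow> take k y @ drop k x \<in> E" for k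
  proof (induction k)
    case 0 then show ?case using x by simp
  next
    case (Suc k)
    have ly: "length y = n" "length x = n" using x y unfolding words_def by auto
    have "y ! k \<in> Sigma" using y Suc.prems unfolding words_def by auto
    then show ?case using take_drop_upd[of x y k] ly Suc E by simp
  qed
  from this[of n] show ?thesis using x y unfolding words_def by simp
qed


lemma line_card2:
  assumes "double_code n R" "L \<in> lines n" "L \<inter> R \<noteq> {}"
  shows "card (R \<inter> L) = 2"
proof -
  have "R \<inter> L \<noteq> {}" using assms(3) by blast
  then have "card (R \<inter> L) \<noteq> 0" using lines_finite[OF assms(2)] by simp
  moreover have "card (R \<inter> L) = 0 \<or> card (R \<inter> L) = 2"
    using assms(1,2) unfolding double_code_def by blast
  ultimately show ?thesis by auto
qed

lemma diff_dc:
  assumes S: "double_MDS_code n S" and RS: "R \<subseteq> S" and R: "double_code n R"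
  shows "double_code n (S - R)"
  unfolding double_code_def
proof (intro conjI ballI)
  show "S - R \<subseteq> words n" using S unfolding double_MDS_code_def by blast
next
  fix L assume L: "L \<in> lines n"
  have f: "finite L" using lines_finite[OF L] .
  have c2: "card (S \<inter> L) = 2" using S L unfolding double_MDS_code_def by blast
  have cr: "card (R \<inter> L) = 0 \<or> card (R \<inter> L) = 2" using R L unfolding double_code_def by blast
  have eq: "(S - R) \<inter> L = (S \<inter> L) - (R \<inter> L)" by blast
  have "card ((S - R) \<inter> L) = card (S \<inter> L) - card (R \<inter> L)"
    unfolding eq using RS f by (intro card_Diff_subset) auto
  then show "card ((S - R) \<inter> L) = 0 \<or> card ((S - R) \<inter> L) = 2" using c2 cr by auto
qed

lemma prime_eq:
  assumes S: "double_MDS_code n S" and RS: "R \<subseteq> S" and R: "prime_dc n R"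
    and P: "prime_dc n S"
  shows "S = R"
proof (rule ccontr)
  assume ne: "S \<noteq> R"
  have Rd: "double_code n R" "R \<noteq> {}" using R unfolding prime_dc_def complementable_def by auto
  have D: "double_code n (S - R)" using diff_dc[OF S RS Rd(1)] .
  have SR: "S - R \<noteq> {}" using ne RS by blast
  have "R \<noteq> S - R" using Rd(2) by blast
  then have "card {R, S - R} = 2" by simp
  moreover have "\<Union>{R, S - R} = S" using RS by blast
  ultimately have "partitionable_dc n S"
    unfolding partitionable_dc_def using D Rd SR
    by (intro exI[of _ "{R, S - R}"]) auto
  then show False using P unfolding prime_dc_def by blast
qed

lemma bsl_MDS:
  assumes R: "double_MDS_code n R" and i: "i \<in> {1..n}"
  shows "bsl n i R = words n - R"
proof -
  have "Ext n i R = words n"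
  proof
    show "Ext n i R \<subseteq> words n" unfolding Ext_def ilines_def using iline_words by blast
  next
    show "words n \<subseteq> Ext n i R"
    proof
      fix x assume x: "x \<in> words n"
      have L: "iline i x \<in> lines n" using iline_lines[OF x i] .
      have "card (R \<inter> iline i x) = 2" using R L unfolding double_MDS_code_def by blast
      then have "iline i x \<inter> R \<noteq> {}" by (metis Int_commute card.empty zero_neq_numeral)
      moreover have "x \<in> iline i x" using self_in_iline[OF x] i by auto
      ultimately show "x \<in> Ext n i R" using x Ext_mem by blast
    qed
  qed
  then show ?thesis unfolding bsl_def by simp
qed

theorem proposition7:
  fixes n :: nat and S R :: "nat list set"
  assumes "double_MDS_code n S"
    and "R \<subseteq> S"
    and "prime_dc n R"
  shows "prime_dc n S \<longleftrightarrow> (\<forall>i\<in>{1..n}. \<forall>i'\<in>{1..n}. bsl n i R = bsl n i' R)"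
proof
  assume P: "prime_dc n S"
  have "S = R" using prime_eq[OF assms P] .
  then show "\<forall>i\<in>{1..n}. \<forall>i'\<in>{1..n}. bsl n i R = bsl n i' R"
    using bsl_MDS assms(1) by auto
next
  assume B: "\<forall>i\<in>{1..n}. \<forall>i'\<in>{1..n}. bsl n i R = bsl n i' R"
  have Rd: "double_code n R" "R \<noteq> {}" using assms(3) unfolding prime_dc_def complementable_def by auto
  have Sw: "S \<subseteq> words n" using assms(1) unfolding double_MDS_code_def by blast
  have "S = R"
  proof (cases "n = 0")
    case True
    then have "words n = {[]}" unfolding words_def by (auto simp: Sigma_def)
    then have "S \<subseteq> {[]}" using Sw by simp
    then show ?thesis using Rd(2) assms(2) by (metis subset_singletonD subset_empty subset_antisym)
  next
    case False
    have RE: "R \<subseteq> Ext n i R" if i: "i \<in> {1..n}" for i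
    proof
      fix x assume x: "x \<in> R"
      have xw: "x \<in> words n" using x Rd(1) unfolding double_code_def by blast
      have "x \<in> iline i x" using self_in_iline[OF xw] i by auto
      then show "x \<in> Ext n i R" using x xw Ext_mem by blast
    qed
    define E where "E = Ext n 1 R"
    have Ei: "Ext n i R = E" if i: "i \<in> {1..n}" for i
    proof -
      have 1: "1 \<in> {1..n}" using False by simp
      have "bsl n i R = bsl n 1 R" using B i 1 by blast
      then have "Ext n i R - R = Ext n 1 R - R" unfolding bsl_def .
      then show ?thesis unfolding E_def using RE[OF i] RE[OF 1] by blast
    qed
    obtain r where r: "r \<in> R" using Rd(2) by blast
    have rw: "r \<in> words n" using r Rd(1) unfolding double_code_def by blast
    have rE: "r \<in> E" using RE[of 1] r False unfolding E_def by auto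
    have Eall: "y \<in> E" if y: "y \<in> words n" for y
    proof (rule closure_all[OF _ rE rw y])
      fix j z a assume j: "j < n" and z: "z \<in> E" and a: "a \<in> Sigma"
      have js: "Suc j \<in> {1..n}" using j by auto
      show "z[j := a] \<in> E" using Ext_upd[of z n j R a] z a Ei[OF js] by simp
    qed
    have "S \<subseteq> R"
    proof
      fix x assume xS: "x \<in> S"
      have xw: "x \<in> words n" using xS Sw by blast
      have 1: "1 \<in> {1..n}" using False by simp
      have L: "iline 1 x \<in> lines n" using iline_lines[OF xw 1] .
      have "x \<in> Ext n 1 R" using Eall[OF xw] unfolding E_def .
      then obtain z where z: "z \<in> words n" "x \<in> iline 1 z" "iline 1 z \<inter> R \<noteq> {}"
        using Ext_mem by blast
      have "iline 1 x = iline 1 z" using iline_same[OF z(2)] .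
      then have cR: "card (R \<inter> iline 1 x) = 2" using line_card2[OF Rd(1) L] z(3) by simp
      have cS: "card (S \<inter> iline 1 x) = 2" using assms(1) L unfolding double_MDS_code_def by blast
      have sub: "R \<inter> iline 1 x \<subseteq> S \<inter> iline 1 x" using assms(2) by blast
      have "R \<inter> iline 1 x = S \<inter> iline 1 x"
        using card_subset_eq[OF _ sub] cR cS iline_finite by simp
      moreover have "x \<in> iline 1 x" using self_in_iline[OF xw] False by simp
      ultimately show "x \<in> R" using xS by blast
    qed
    then show ?thesis using assms(2) by blast
  qed
  then show "prime_dc n S" using assms(3) by simp
qed

end
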